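(* Let $0<m\le L$, let $f:\mathbb R^d\to\mathbb R$ be $m$-strongly convex and $L$-smooth with minimizer $x^\star$, and fix $\bar b>0$ and initial data $x(0),\dot x(0)$ for $\ddot x+\bar b\sqrt m\dot x+\nabla f(x)=0$, with solution $x(t)$. For small $h>0$ run the iteration $x_{k+1}=x_k+\beta_h(x_k-x_{k-1})-\alpha\nabla f(y_k)$, $y_k=x_k+\beta_h(x_k-x_{k-1})$, with $\alpha=h^2$ and $\beta_h=1-\bar b\sqrt m h+o(h)$ as $h\downarrow0$, from starting points $x_{-1}=x_{-1}(h)$, $x_0=x_0(h)$ with $x_0\to x(0)$ and $(x_0-x_{-1})/h\to\dot x(0)$ as $h\downarrow0$. Let $\delta=\sqrt m h$, $b_h=(1-\beta_h)/\delta$, $r_h$ the unique real root of $\Xi_\delta(r,b_h)=0$, $\rho_h^2=1-r_h\delta$, and $$V_k^h=\rho_h^{-2k}\Big(f(x_k)-f(x^\star)+\tfrac m2\big\|(1-r_h\delta)\tfrac{x_k-x_{k-1}}{\delta}+r_h(x_k-x^\star)\big\|^2\Big).$$ Let $\bar r$ be the unique real root of $\bar\Xi(\bar r,\bar b)=0$, $\lambda=\sqrt m\bar r$, and $\bar V(t)=e^{\lambda t}\big(f(x(t))-f(x^\star)+\frac m2\|\dot x(t)/\sqrt m+\bar r(x(t)-x^\star)\|^2\big)$. Then $r_h\to\bar r$, and in the limit $h\downarrow0$, $k\to\infty$ with $kh\to t$: $x_k\to x(t)$, $(x_{k+1}-x_k)/h\to\dot x(t)$, and $V_k^h\to\bar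 V(t)$.
   Context: $\Xi_\delta(r,b)=(r+\delta)(1-\delta^2)b^2-2(1+r^2)(1-\delta^2)b+(r^3-3r^2\delta+3r-\delta)$ and $\bar\Xi(\bar r,\bar b)=\bar r\bar b^2-2(\bar r^2+1)\bar b+\bar r^3+3\bar r$. $f$ $m$-strongly convex: $f(y)\ge f(x)+\nabla f(x)^T(y-x)+\frac m2\|y-x\|^2$; $L$-smooth: $\nabla f$ is $L$-Lipschitz. *)

theory Defs
  imports "HOL-Analysis.Analysis"
begin

definition Xi :: "real \<Rightarrow> real \<Rightarrow> real \<Rightarrow> real" where
  "Xi \<delta> r b = (r + \<delta>) * (1 - \<delta>^2) * b^2 - 2 * (1 + r^2) * (1 - \<delta>^2) * b
                 + (r^3 - 3 * r^2 * \<delta> + 3 * r - \<delta>)"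

definition Xibar :: "real \<Rightarrow> real \<Rightarrow> real" where
  "Xibar r b = r * b^2 - 2 * (r^2 + 1) * b + r^3 + 3 * r"

text \<open>The iteration: nag g alpha beta x_{-1} x_0 k = (x_{k-1}, x_k), where
  y_k = x_k + beta (x_k - x_{k-1}) and x_{k+1} = y_k - alpha g(y_k).\<close>
fun nag :: "('a::real_vector \<Rightarrow> 'a) \<Rightarrow> real \<Rightarrow> real \<Rightarrow> 'a \<Rightarrow> 'a \<Rightarrow> nat \<Rightarrow> 'a \<times> 'a" where
  "nag g \<alpha> \<beta> xm1 x0 0 = (xm1, x0)"
| "nag g \<alpha> \<beta> xm1 x0 (Suc k) =
     (let (p, c) = nag g \<alpha> \<beta> xm1 x0 k; y = c + \<beta> *\<^sub>R (c - p) in (c, y - \<alpha> *\<^sub>R g y))"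

end

theory Submission
  imports Defs
begin

definition cub :: "real \<Rightarrow> real \<Rightarrow> real \<Rightarrow> real \<Rightarrow> real" where
  "cub A B C r = r^3 + A*r^2 + B*r + C"

definition disc :: "real \<Rightarrow> real \<Rightarrow> real \<Rightarrow> real" where
  "disc A B C = 18*A*B*C - 4*A^3*C + A^2*B^2 - 4*B^3 - 27*C^2"

lemma cub_cont: "continuous_on S (cub A B C)"
  unfolding cub_def by (intro continuous_intros)

lemma cub_large: "\<exists>R. \<forall>r\<ge>R. cub A B C r > 0"
proof (intro exI allI impI)
  fix r :: real
  let ?R = "1 + \<bar>A\<bar> + \<bar>B\<bar> + \<bar>C\<bar>"
  assume r: "?R \<le> r"
  have r1: "1 \<le> r" using r by linarith
  have r2: "r^2 \<ge> 1" using r1 by (simp add: one_le_power)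
  have "-\<bar>A\<bar> \<le> A" by simp
  from mult_right_mono[OF this, of "r^2"] have a: "A*r^2 \<ge> -\<bar>A\<bar>*r^2" by simp
  have "-\<bar>B\<bar> \<le> B" by simp
  from mult_right_mono[OF this, of "r"] r1 have "B*r \<ge> -\<bar>B\<bar>*r" by simp
  moreover have "\<bar>B\<bar>*r \<le> \<bar>B\<bar>*r^2" using r1
    by (intro mult_left_mono) (auto simp: power2_eq_square)
  ultimately have b: "B*r \<ge> -\<bar>B\<bar>*r^2" by linarith
  have c: "C \<ge> -\<bar>C\<bar>*r^2" using r2
    by (smt (verit) abs_ge_zero mult_le_cancel_left1 mult_minus_left)
  have "r^3 = r * r^2" by (simp add: power2_eq_square power3_eq_cube)
  also have "\<dots> \<ge> (?R) * r^2" using r by (intro mult_right_mono) auto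
  finally have "r^3 \<ge> ?R * r^2" .
  hence "cub A B C r \<ge> r^2" unfolding cub_def using a b c by (simp add: algebra_simps)
  thus "cub A B C r > 0" using r2 by linarith
qed

lemma cub_small: "\<exists>R. \<forall>r\<le>R. cub A B C r < 0"
proof -
  obtain R where R: "\<forall>r\<ge>R. cub (-A) B (-C) r > 0" using cub_large by blast
  have "cub A B C r = - cub (-A) B (-C) (-r)" for r unfolding cub_def by (simp add: power3_eq_cube power2_eq_square)
  thus ?thesis using R by (intro exI[of _ "-R"]) force
qed

lemma cub_exists: "\<exists>r. cub A B C r = 0"
proof -
  obtain R1 where R1: "\<forall>r\<ge>R1. cub A B C r > 0" using cub_large by blast
  obtain R2 where R2: "\<forall>r\<le>R2. cub A B C r < 0" using cub_small by blast
  let ?a = "min R1 R2" and ?b = "max R1 R2"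
  have "cub A B C ?a \<le> 0" "0 \<le> cub A B C ?b" using R1 R2 by (auto simp: less_imp_le)
  from IVT'[of "cub A B C" ?a 0 ?b, OF this _ cub_cont] show ?thesis
    by (metis max.cobounded1 min.cobounded1 order_trans)
qed

lemma cub_unique:
  assumes d: "disc A B C < 0" and r1: "cub A B C r1 = 0" and r2: "cub A B C r2 = 0"
  shows "r1 = r2"
proof (rule ccontr)
  assume ne: "r1 \<noteq> r2"
  have "(r1 - r2) * (r1^2 + r1*r2 + r2^2 + A*(r1+r2) + B) = cub A B C r1 - cub A B C r2"
    unfolding cub_def by (simp add: algebra_simps power2_eq_square power3_eq_cube)
  hence Q: "r1^2 + r1*r2 + r2^2 + A*(r1+r2) + B = 0" using r1 r2 ne by simp
  define r3 where "r3 = -A - r1 - r2"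
  have Aeq: "A = -(r1+r2+r3)" unfolding r3_def by simp
  have Beq: "B = r1*r2 + r3*(r1+r2)" using Q unfolding r3_def
    by (simp add: algebra_simps power2_eq_square)
  have Ceq: "C = - r1*r2*r3" using r1 unfolding cub_def Aeq Beq
    by (simp add: algebra_simps power2_eq_square power3_eq_cube)
  have "disc A B C = ((r1-r2)*(r1-r3)*(r2-r3))^2"
    unfolding disc_def Aeq Beq Ceq by algebra
  hence "disc A B C \<ge> 0" by simp
  thus False using d by simp
qed

lemma cub_sign:
  assumes d: "disc A B C < 0" and r0: "cub A B C r0 = 0"
  shows "r > r0 \<Longrightarrow> cub A B C r > 0" and "r < r0 \<Longrightarrow> cub A B C r < 0"
proof -
  assume rr: "r > r0"
  show "cub A B C r > 0"
  proof (rule ccontr)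
    assume "\<not> cub A B C r > 0"
    hence le: "cub A B C r \<le> 0" by simp
    obtain R where R: "\<forall>s\<ge>R. cub A B C s > 0" using cub_large by blast
    have "0 \<le> cub A B C (max R r)" using R by (simp add: less_imp_le)
    from IVT'[of "cub A B C" r 0 "max R r", OF le this] cub_cont
    obtain s where "s \<ge> r" "cub A B C s = 0" by auto
    with cub_unique[OF d r0] rr show False by force
  qed
next
  assume rr: "r < r0"
  show "cub A B C r < 0"
  proof (rule ccontr)
    assume "\<not> cub A B C r < 0"
    hence le: "0 \<le> cub A B C r" by simp
    obtain R where R: "\<forall>s\<le>R. cub A B C s < 0" using cub_small by blast
    have "cub A B C (min R r) \<le> 0" using R by (simp add: less_imp_le)
    from IVT'[of "cub A B C" "min R r" 0 r, OF this le _ cub_cont]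
    obtain s where "s \<le> r" "cub A B C s = 0" by auto
    with cub_unique[OF d r0] rr show False by force
  qed
qed

lemma Xi_cub: "Xi d r b = cub (-2*b*(1-d^2) - 3*d) (b^2*(1-d^2) + 3) (d*b^2*(1-d^2) - 2*b*(1-d^2) - d) r"
  unfolding Xi_def cub_def by (simp add: algebra_simps power2_eq_square power3_eq_cube)

lemma Xibar_cub: "Xibar r b = cub (-2*b) (b^2 + 3) (-2*b) r"
  unfolding Xibar_def cub_def by (simp add: algebra_simps power2_eq_square power3_eq_cube)

lemma disc_bar: "disc (-2*b) (b^2 + 3) (-2*b) < 0"
proof -
  have "disc (-2*b) (b^2 + 3) (-2*b) = -4*((b^2 - 9/2)^2 + 27/4)"
    unfolding disc_def by (simp add: algebra_simps power2_eq_square power3_eq_cube)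
  also have "\<dots> < 0"
  proof -
    have "(b^2 - 9/2)^2 + 27/4 > (0::real)" by (simp add: add_nonneg_pos)
    thus ?thesis by simp
  qed
  finally show ?thesis .
qed


lemma unif_taylor:
  fixes F F' :: "real \<Rightarrow> 'a::real_normed_vector"
  assumes der: "\<And>t. t \<ge> 0 \<Longrightarrow> (F has_vector_derivative F' t) (at t within {0..})"
    and cont: "continuous_on {0..} F'"
    and e: "e > 0" and T: "T \<ge> 0"
  shows "\<exists>d>0. \<forall>h s. 0 < h \<longrightarrow> h < d \<longrightarrow> 0 \<le> s \<longrightarrow> s \<le> T \<longrightarrow>
     norm (F (s+h) - F s - h *\<^sub>R F' s) \<le> h*e \<and> norm (F (s+h) - F s - h *\<^sub>R F' (s+h)) \<le> h*e"
proof -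
  have "continuous_on {0..T+1} F'" using cont by (rule continuous_on_subset) auto
  hence "uniformly_continuous_on {0..T+1} F'" by (intro compact_uniformly_continuous) auto
  then obtain d0 where d0: "d0 > 0" and
    uc: "\<And>x x'. x \<in> {0..T+1} \<Longrightarrow> x' \<in> {0..T+1} \<Longrightarrow> dist x' x < d0 \<Longrightarrow> dist (F' x') (F' x) < e"
    unfolding uniformly_continuous_on_def using e by metis
  show ?thesis
  proof (intro exI[of _ "min d0 1"] conjI allI impI)
    show "min d0 1 > 0" using d0 by simp
    fix h s :: real
    assume h: "0 < h" "h < min d0 1" and s: "0 \<le> s" "s \<le> T"
    have derS: "\<And>t. t \<in> {s..s+h} \<Longrightarrow> (F has_vector_derivative F' t) (at t within {s..s+h})"
      using s h by (intro has_vector_derivative_within_subset[OF der]) auto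
    have seg: "closed_segment s (s+h) \<subseteq> {s..s+h}" using h by (simp add: closed_segment_eq_real_ivl)
    have B1: "norm (F' t - F' s) \<le> e" if "t \<in> {s..s+h}" for t
    proof -
      have "dist (F' t) (F' s) < e" using that s h by (intro uc) (auto simp: dist_real_def)
      thus ?thesis by (simp add: dist_norm)
    qed
    have B2: "norm (F' t - F' (s+h)) \<le> e" if "t \<in> {s..s+h}" for t
    proof -
      have "dist (F' t) (F' (s+h)) < e" using that s h by (intro uc) (auto simp: dist_real_def)
      thus ?thesis by (simp add: dist_norm)
    qed
    have sS: "s \<in> {s..s+h}" "s+h \<in> {s..s+h}" using h by auto
    from vector_differentiable_bound_linearization[OF derS seg B1 sS(1)] h
    show "norm (F (s+h) - F s - h *\<^sub>R F' s) \<le> h*e" by (simp add: mult.commute)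
    from vector_differentiable_bound_linearization[OF derS seg B2 sS(2)] h
    show "norm (F (s+h) - F s - h *\<^sub>R F' (s+h)) \<le> h*e" by (simp add: mult.commute)
  qed
qed

lemma nag_fst: "fst (nag g a b p0 c0 (Suc k)) = snd (nag g a b p0 c0 k)"
  by (cases "nag g a b p0 c0 k") (simp add: Let_def)

lemma nag_snd: "snd (nag g a b p0 c0 (Suc k)) =
   (snd (nag g a b p0 c0 k) + b *\<^sub>R (snd (nag g a b p0 c0 k) - fst (nag g a b p0 c0 k)))
   - a *\<^sub>R g (snd (nag g a b p0 c0 k) + b *\<^sub>R (snd (nag g a b p0 c0 k) - fst (nag g a b p0 c0 k)))"
  by (cases "nag g a b p0 c0 k") (simp add: Let_def)

lemma nag_0: "fst (nag g a b p0 c0 0) = p0" "snd (nag g a b p0 c0 0) = c0"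
  by simp_all

lemma gronwall:
  fixes a :: "nat \<Rightarrow> real"
  assumes C: "C \<ge> 0" and h: "h \<ge> 0" and eta: "\<eta> \<ge> 0" and a0: "a 0 \<ge> 0"
    and step: "\<And>k. k < N \<Longrightarrow> a (Suc k) \<le> (1 + C*h) * a k + h*\<eta>"
  shows "k \<le> N \<Longrightarrow> a k \<le> exp (C*h*real k) * (a 0 + real k*h*\<eta>)"
proof (induction k)
  case 0 thus ?case by simp
next
  case (Suc k)
  hence ih: "a k \<le> exp (C*h*real k) * (a 0 + real k*h*\<eta>)" by simp
  have nn: "a 0 + real k*h*\<eta> \<ge> 0" using a0 h eta by simp
  have e1: "1 + C*h \<le> exp (C*h)" using exp_ge_add_one_self by simp
  have "a (Suc k) \<le> (1 + C*h) * a k + h*\<eta>" using Suc by (intro step) simp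
  also have "\<dots> \<le> (1 + C*h) * (exp (C*h*real k) * (a 0 + real k*h*\<eta>)) + h*\<eta>"
    using ih C h by (intro add_right_mono mult_left_mono) auto
  also have "\<dots> \<le> exp (C*h) * (exp (C*h*real k) * (a 0 + real k*h*\<eta>)) + h*\<eta>"
    using e1 nn by (intro add_right_mono mult_right_mono) auto
  also have "\<dots> = exp (C*h*real (Suc k)) * (a 0 + real k*h*\<eta>) + h*\<eta>"
    by (simp add: mult_exp_exp[symmetric] algebra_simps)
  also have "\<dots> \<le> exp (C*h*real (Suc k)) * (a 0 + real k*h*\<eta>) + exp (C*h*real (Suc k)) * (h*\<eta>)"
  proof -
    have "1 \<le> exp (C*h*real (Suc k))" using h C by simp
    from mult_right_mono[OF this, of "h*\<eta>"] h eta show ?thesis by simp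
  qed
  also have "\<dots> = exp (C*h*real (Suc k)) * (a 0 + real (Suc k)*h*\<eta>)"
    by (simp add: algebra_simps)
  finally show ?case .
qed

definition phi :: "real \<Rightarrow> real" where "phi a = (if a = 0 then 1 else - ln (1 - a) / a)"

lemma phi_cont: "isCont phi 0"
proof -
  have d: "((\<lambda>a::real. 1 - a) has_real_derivative 0 - 1) (at 0)"
    by (rule DERIV_diff[OF DERIV_const DERIV_ident])
  have "((\<lambda>a::real. ln (1 - a)) has_real_derivative inverse (1 - 0) * (0 - 1)) (at 0)"
    by (rule DERIV_chain2[OF DERIV_ln d]) simp
  hence "((\<lambda>a::real. ln (1 - a)) has_field_derivative -1) (at 0)" by simp
  from has_field_derivative_iff[THEN iffD1, OF this]
  have "((\<lambda>y::real. (ln (1 - y) - ln (1 - 0)) / (y - 0)) \<longlongrightarrow> -1) (at 0)" .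
  hence "((\<lambda>y::real. ln (1 - y) / y) \<longlongrightarrow> -1) (at 0)" by simp
  hence "((\<lambda>y::real. - (ln (1 - y) / y)) \<longlongrightarrow> 1) (at 0)"
    using tendsto_minus by fastforce
  hence "(phi \<longlongrightarrow> 1) (at 0)"
    by (rule tendsto_cong[THEN iffD1, rotated])
       (auto simp: phi_def eventually_at_filter)
  thus ?thesis unfolding isCont_def by (simp add: phi_def)
qed

lemma pow_exp_phi:
  assumes "a < 1"
  shows "(1 / (1 - a)) ^ k = exp (real k * a * phi a)"
proof -
  have pos: "0 < 1 / (1 - a)" using assms by simp
  have "(1 / (1 - a)) ^ k = exp (ln ((1 / (1 - a)) ^ k))" using pos by simp
  also have "ln ((1 / (1 - a)) ^ k) = real k * ln (1 / (1 - a))" using pos by (simp add: ln_realpow)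
  also have "ln (1 / (1 - a)) = - ln (1 - a)" using assms by (simp add: ln_div)
  also have "- ln (1 - a) = a * phi a" by (simp add: phi_def)
  finally show ?thesis by (simp add: mult.assoc)
qed


definition cA :: "real \<Rightarrow> real \<Rightarrow> real" where "cA d b = -2*b*(1-d^2) - 3*d"
definition cB :: "real \<Rightarrow> real \<Rightarrow> real" where "cB d b = b^2*(1-d^2) + 3"
definition cC :: "real \<Rightarrow> real \<Rightarrow> real" where "cC d b = d*b^2*(1-d^2) - 2*b*(1-d^2) - d"

lemma Xi_cub': "Xi d r b = cub (cA d b) (cB d b) (cC d b) r"
  unfolding cA_def cB_def cC_def by (rule Xi_cub)

lemma coef0: "cA 0 b = -2*b" "cB 0 b = b^2+3" "cC 0 b = -2*b"
  by (simp_all add: cA_def cB_def cC_def)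

lemma tendsto_coefs:
  fixes F :: "'b filter"
  assumes d: "(D \<longlongrightarrow> d0) F" and b: "(Bf \<longlongrightarrow> b0) F"
  shows "((\<lambda>x. cA (D x) (Bf x)) \<longlongrightarrow> cA d0 b0) F"
        "((\<lambda>x. cB (D x) (Bf x)) \<longlongrightarrow> cB d0 b0) F"
        "((\<lambda>x. cC (D x) (Bf x)) \<longlongrightarrow> cC d0 b0) F"
  unfolding cA_def cB_def cC_def by (intro tendsto_intros d b)+

lemma tendsto_disc:
  assumes "(a \<longlongrightarrow> a0) F" "(b \<longlongrightarrow> b0) F" "(c \<longlongrightarrow> c0) F"
  shows "((\<lambda>x. disc (a x) (b x) (c x)) \<longlongrightarrow> disc a0 b0 c0) F"
  unfolding disc_def by (intro tendsto_intros assms)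

lemma tendsto_cub:
  assumes "(a \<longlongrightarrow> a0) F" "(b \<longlongrightarrow> b0) F" "(c \<longlongrightarrow> c0) F"
  shows "((\<lambda>x. cub (a x) (b x) (c x) r) \<longlongrightarrow> cub a0 b0 c0 r) F"
  unfolding cub_def by (intro tendsto_intros assms)

lemma the_root:
  assumes "disc A B C < 0"
  shows "cub A B C (THE r. cub A B C r = 0) = 0"
proof -
  have "\<exists>!r. cub A B C r = 0" using cub_exists cub_unique[OF assms] by blast
  thus ?thesis by (rule theI')
qed

lemma rbar_root: "Xibar (THE r. Xibar r b = 0) b = 0"
  unfolding Xibar_cub by (rule the_root[OF disc_bar])

lemma rh_conv:
  fixes m bbar :: real and beta :: "real \<Rightarrow> real"
  assumes mpos: "0 < m"
    and beta_asym: "((\<lambda>h. (beta h - (1 - bbar * sqrt m * h)) / h) \<longlongrightarrow> 0) (at_right 0)"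
  shows "((\<lambda>h. THE r. Xi (sqrt m * h) r ((1 - beta h) / (sqrt m * h)) = 0)
           \<longlongrightarrow> (THE r. Xibar r bbar = 0)) (at_right 0)"
proof -
  define dh where "dh h = sqrt m * h" for h :: real
  define bh where "bh h = (1 - beta h) / (sqrt m * h)" for h
  define rbar where "rbar = (THE r. Xibar r bbar = 0)"
  have sm: "sqrt m > 0" using mpos by simp
  have dh: "(dh \<longlongrightarrow> 0) (at_right 0)" unfolding dh_def
    by (rule tendsto_eq_intros) (auto intro: tendsto_ident_at)
  have "((\<lambda>h. bbar - ((beta h - (1 - bbar * sqrt m * h)) / h) / sqrt m) \<longlongrightarrow> bbar - 0 / sqrt m) (at_right 0)"
    using sm by (intro tendsto_intros beta_asym) auto
  hence "((\<lambda>h. bbar - ((beta h - (1 - bbar * sqrt m * h)) / h) / sqrt m) \<longlongrightarrow> bbar) (at_right 0)" by simp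
  moreover have "eventually (\<lambda>h. bbar - ((beta h - (1 - bbar * sqrt m * h)) / h) / sqrt m = bh h) (at_right 0)"
    by (rule eventually_at_rightI[of 0 1]) (use sm in \<open>auto simp: bh_def field_simps\<close>)
  ultimately have bh: "(bh \<longlongrightarrow> bbar) (at_right 0)" by (rule Lim_transform_eventually)
  note co = tendsto_coefs[OF dh bh, unfolded coef0]
  have rb: "cub (-2*bbar) (bbar^2+3) (-2*bbar) rbar = 0"
    using rbar_root[of bbar] unfolding rbar_def Xibar_cub .
  have dlim: "eventually (\<lambda>h. disc (cA (dh h) (bh h)) (cB (dh h) (bh h)) (cC (dh h) (bh h)) < 0) (at_right 0)"
    using order_tendstoD(2)[OF tendsto_disc[OF co] disc_bar] .
  show ?thesis
    unfolding rbar_def[symmetric] tendsto_iff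
  proof (intro allI impI)
    fix e :: real assume e: "e > 0"
    have p: "cub (-2*bbar) (bbar^2+3) (-2*bbar) (rbar + e) > 0"
      using cub_sign(1)[OF disc_bar rb] e by simp
    have n: "cub (-2*bbar) (bbar^2+3) (-2*bbar) (rbar - e) < 0"
      using cub_sign(2)[OF disc_bar rb] e by simp
    have ep: "eventually (\<lambda>h. cub (cA (dh h) (bh h)) (cB (dh h) (bh h)) (cC (dh h) (bh h)) (rbar + e) > 0) (at_right 0)"
      using order_tendstoD(1)[OF tendsto_cub[OF co] p] .
    have en: "eventually (\<lambda>h. cub (cA (dh h) (bh h)) (cB (dh h) (bh h)) (cC (dh h) (bh h)) (rbar - e) < 0) (at_right 0)"
      using order_tendstoD(2)[OF tendsto_cub[OF co] n] .
    show "eventually (\<lambda>h. dist (THE r. Xi (sqrt m * h) r ((1 - beta h) / (sqrt m * h)) = 0) rbar < e) (at_right 0)"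
      using dlim ep en
    proof eventually_elim
      case (elim h)
      let ?A = "cA (dh h) (bh h)" and ?B = "cB (dh h) (bh h)" and ?C = "cC (dh h) (bh h)"
      have eq: "(THE r. Xi (sqrt m * h) r ((1 - beta h) / (sqrt m * h)) = 0) = (THE r. cub ?A ?B ?C r = 0)"
        unfolding Xi_cub' dh_def bh_def ..
      define r0 where "r0 = (THE r. cub ?A ?B ?C r = 0)"
      have r0: "cub ?A ?B ?C r0 = 0" unfolding r0_def by (rule the_root[OF elim(1)])
      have "\<not> rbar + e < r0" using cub_sign(2)[OF elim(1) r0, of "rbar + e"] elim(2) by linarith
      moreover have "rbar + e \<noteq> r0" using r0 elim(2) by auto
      moreover have "\<not> rbar - e > r0" using cub_sign(1)[OF elim(1) r0, of "rbar - e"] elim(3) by linarith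
      moreover have "rbar - e \<noteq> r0" using r0 elim(3) by auto
      ultimately show ?case unfolding eq r0_def[symmetric] dist_real_def by linarith
    qed
  qed
qed


lemma norm4: "norm (a + b - c - d) \<le> norm a + norm b + norm c + norm (d::'a::real_normed_vector)"
proof -
  have "norm (a+b-c-d) \<le> norm (a+b-c) + norm d" by (rule norm_triangle_ineq4)
  moreover have "norm (a+b-c) \<le> norm (a+b) + norm c" by (rule norm_triangle_ineq4)
  moreover have "norm (a+b) \<le> norm a + norm b" by (rule norm_triangle_ineq)
  ultimately show ?thesis by linarith
qed

lemma one_step:
  fixes g :: "'a::real_normed_vector \<Rightarrow> 'a" and P Q Q' X0 X1 V0 V1 :: 'a
  assumes h: "0 < h" "h \<le> 1" and Kh: "K*h \<le> 1" and K: "K = c + 1" and c: "c \<ge> 0"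
    and L: "L \<ge> 0" and M: "M \<ge> 0" and et: "\<eta>1 \<ge> 0" "\<eta>2 \<ge> 0" "\<eta>3 \<ge> 0" "\<eta>3 \<le> 1"
    and q: "\<bar>\<beta> - 1 + c*h\<bar> \<le> h*\<eta>3"
    and V0: "norm V0 \<le> M"
    and lip: "\<And>a b. norm (g a - g b) \<le> L * norm (a - b)"
    and Q': "Q' = (Q + \<beta> *\<^sub>R (Q - P)) - (h^2) *\<^sub>R g (Q + \<beta> *\<^sub>R (Q - P))"
    and U1: "norm (V1 - V0 - h *\<^sub>R (- c *\<^sub>R V0 - g X0)) \<le> h*\<eta>1"
    and U2: "norm (X1 - X0 - h *\<^sub>R V1) \<le> h*\<eta>2"
  shows "norm (Q' - X1) + norm ((1/h) *\<^sub>R (Q' - Q) - V1) \<le>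
     (1 + (1 + 2*K + 4*L)*h) * (norm (Q - X0) + norm ((1/h) *\<^sub>R (Q - P) - V0))
     + h*(2*(\<eta>3*M + 2*h*L*M + \<eta>1) + \<eta>2)"
proof -
  define u where "u = (1/h) *\<^sub>R (Q - P)"
  define y where "y = Q + \<beta> *\<^sub>R (Q - P)"
  define u' where "u' = (1/h) *\<^sub>R (Q' - Q)"
  define e where "e = Q - X0"
  define w where "w = u - V0"
  define q where "q = \<beta> - 1 + c*h"
  define D1 where "D1 = V1 - V0 - h *\<^sub>R (- c *\<^sub>R V0 - g X0)"
  define D2 where "D2 = X1 - X0 - h *\<^sub>R V1"
  have QP: "Q - P = h *\<^sub>R u" using h unfolding u_def by simp
  have y: "y = Q + (\<beta>*h) *\<^sub>R u" unfolding y_def QP by simp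
  have Q'Q: "Q' - Q = h *\<^sub>R (\<beta> *\<^sub>R u - h *\<^sub>R g y)"
    unfolding Q' y_def[symmetric] unfolding y by (simp add: algebra_simps power2_eq_square)
  have u': "u' = \<beta> *\<^sub>R u - h *\<^sub>R g y" unfolding u'_def Q'Q using h by simp
  have w': "u' - V1 = \<beta> *\<^sub>R w + q *\<^sub>R V0 - h *\<^sub>R (g y - g X0) - D1"
    unfolding u' w_def q_def D1_def by (simp add: algebra_simps)
  have hu': "h *\<^sub>R u' = Q' - Q" unfolding u'_def using h by simp
  have e': "Q' - X1 = e + h *\<^sub>R (u' - V1) - D2"
  proof -
    have "e + h *\<^sub>R (u' - V1) - D2 = (Q - X0) + h *\<^sub>R u' - h *\<^sub>R V1 - (X1 - X0 - h *\<^sub>R V1)"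
      unfolding e_def D2_def by (simp add: scaleR_diff_right)
    also have "\<dots> = Q' - X1" unfolding hu' by simp
    finally show ?thesis by simp
  qed
  have yX: "y - X0 = e + (\<beta>*h) *\<^sub>R (w + V0)" unfolding y e_def w_def by simp
  define W where "W = norm w"
  define Ee where "Ee = norm e"
  define B where "B = \<bar>\<beta>\<bar>"
  have W0: "W \<ge> 0" "Ee \<ge> 0" unfolding W_def Ee_def by simp_all
  have B1: "B \<le> 1 + K*h"
  proof -
    have "\<beta> \<le> 1 - c*h + h*\<eta>3" "\<beta> \<ge> 1 - c*h - h*\<eta>3" using q by linarith+
    moreover have "h*\<eta>3 \<le> h" using h et by (simp add: mult_left_le)
    moreover have "c*h \<le> 1" using Kh K h by (simp add: algebra_simps)
    moreover have "c*h \<ge> 0" using c h by simp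
    moreover have "h \<le> 1" using h by simp
    ultimately have "\<beta> \<le> 1 + h" "-\<beta> \<le> 1" by linarith+
    moreover have "K*h = c*h + h" unfolding K by (simp add: algebra_simps)
    ultimately show ?thesis unfolding B_def using \<open>c*h \<ge> 0\<close> h by (simp add: abs_le_iff)
  qed
  have B2: "B \<le> 2" using B1 Kh by linarith
  have B0: "B \<ge> 0" unfolding B_def by simp
  have ny: "norm (y - X0) \<le> Ee + B*h*(W + M)"
  proof -
    have "norm (y - X0) \<le> Ee + norm ((\<beta>*h) *\<^sub>R (w + V0))" unfolding yX Ee_def by (rule norm_triangle_ineq)
    moreover have "norm ((\<beta>*h) *\<^sub>R (w + V0)) = B*h*norm (w + V0)" unfolding B_def using h by (simp add: abs_mult)
    moreover have "norm (w + V0) \<le> W + M" unfolding W_def using V0 norm_triangle_ineq[of w V0] by linarith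
    moreover have "B*h \<ge> 0" using B0 h by simp
    ultimately show ?thesis by (smt (verit) mult_left_mono)
  qed
  have ng: "norm (h *\<^sub>R (g y - g X0)) \<le> h*L*(Ee + B*h*(W + M))"
  proof -
    have "norm (h *\<^sub>R (g y - g X0)) = h * norm (g y - g X0)" using h by simp
    also have "\<dots> \<le> h * (L * norm (y - X0))" using lip h by (intro mult_left_mono) auto
    also have "\<dots> \<le> h * (L * (Ee + B*h*(W + M)))" using ny h L by (intro mult_left_mono) auto
    finally show ?thesis by (simp add: mult.assoc)
  qed
  have nq: "norm (q *\<^sub>R V0) \<le> h*\<eta>3*M"
  proof -
    have "norm (q *\<^sub>R V0) = \<bar>q\<bar> * norm V0" by simp
    also have "\<dots> \<le> (h*\<eta>3) * M" using q V0 unfolding q_def by (intro mult_mono) auto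
    finally show ?thesis .
  qed
  have nw'0: "norm (u' - V1) \<le> B*W + h*\<eta>3*M + h*L*(Ee + B*h*(W + M)) + h*\<eta>1"
    unfolding w' using norm4[of "\<beta> *\<^sub>R w" "q *\<^sub>R V0" "h *\<^sub>R (g y - g X0)" D1] nq ng U1
    unfolding D1_def[symmetric] W_def B_def by simp
  have t1: "B*W \<le> W + K*h*W" using B1 W0 by (metis distrib_right mult_1 mult_right_mono)
  have t2: "h*L*(B*h*(W + M)) \<le> h*L*(2*h*(W+M))"
    using B2 h L W0 M by (intro mult_left_mono mult_right_mono) auto
  have t3: "h*L*(2*h*(W+M)) \<le> 2*h*L*W + 2*h*h*L*M"
  proof -
    have "h*W \<le> W" using h W0 by (simp add: mult_left_le_one_le)
    hence "h*L*(2*h*W) \<le> h*L*(2*W)" using h L W0 by (intro mult_left_mono) auto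
    thus ?thesis by (simp add: algebra_simps)
  qed
  define \<rho> where "\<rho> = \<eta>3*M + 2*h*L*M + \<eta>1"
  have nw': "norm (u' - V1) \<le> W + h*((K + 2*L)*W + L*Ee) + h*\<rho>"
    using nw'0 t1 t2 t3 unfolding \<rho>_def by (simp add: algebra_simps)
  have hle: "h*(h*((K + 2*L)*W + L*Ee) + h*\<rho>) \<le> h*((K + 2*L)*W + L*Ee) + h*\<rho>"
  proof -
    have "0 \<le> h*((K + 2*L)*W + L*Ee) + h*\<rho>" using h K c L W0 M et unfolding \<rho>_def by simp
    thus ?thesis using h by (simp add: mult_left_le_one_le distrib_left[symmetric])
  qed
  have ne': "norm (Q' - X1) \<le> Ee + h*norm (u' - V1) + h*\<eta>2"
  proof -
    have "norm (Q' - X1) \<le> norm (e + h *\<^sub>R (u' - V1)) + norm D2" unfolding e' by (rule norm_triangle_ineq4)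
    moreover have "norm (e + h *\<^sub>R (u' - V1)) \<le> Ee + h*norm (u' - V1)"
      unfolding Ee_def using norm_triangle_ineq[of e "h *\<^sub>R (u' - V1)"] h by simp
    moreover have "norm D2 \<le> h*\<eta>2" using U2 unfolding D2_def .
    ultimately show ?thesis by linarith
  qed
  have ne'2: "norm (Q' - X1) \<le> Ee + h*W + h*((K + 2*L)*W + L*Ee) + h*\<rho> + h*\<eta>2"
  proof -
    have "h*norm (u' - V1) \<le> h*(W + h*((K + 2*L)*W + L*Ee) + h*\<rho>)" using nw' h by (intro mult_left_mono) auto
    thus ?thesis using ne' hle by (simp add: algebra_simps)
  qed
  have fin: "norm (Q' - X1) + norm (u' - V1) \<le> (1 + (1 + 2*K + 4*L)*h) * (Ee + W) + h*(2*\<rho> + \<eta>2)"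
  proof -
    have "norm (Q' - X1) + norm (u' - V1) \<le> (Ee + W) + h*((1 + 2*K + 4*L)*W + 2*L*Ee) + h*(2*\<rho> + \<eta>2)"
      using nw' ne'2 by (simp add: algebra_simps)
    moreover have "h*(2*L*Ee) \<le> h*((1 + 2*K + 4*L)*Ee)" using h K c L W0 by (intro mult_left_mono mult_right_mono) auto
    ultimately show ?thesis by (simp add: algebra_simps)
  qed
  show ?thesis using fin unfolding u'_def[symmetric] Ee_def W_def e_def w_def u_def \<rho>_def .
qed


lemma key_err:
  fixes gradf :: "'a::real_normed_vector \<Rightarrow> 'a" and x v :: "real \<Rightarrow> 'a"
    and beta :: "real \<Rightarrow> real" and xm1 x0 :: "real \<Rightarrow> 'a"
  assumes L: "L \<ge> 0" and c: "c \<ge> 0"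
    and smooth: "\<And>z y. norm (gradf z - gradf y) \<le> L * norm (z - y)"
    and ode_x: "\<And>t. t \<ge> 0 \<Longrightarrow> (x has_vector_derivative v t) (at t within {0..})"
    and ode_v: "\<And>t. t \<ge> 0 \<Longrightarrow> (v has_vector_derivative (- c *\<^sub>R v t - gradf (x t))) (at t within {0..})"
    and beta_asym: "((\<lambda>h. (beta h - (1 - c * h)) / h) \<longlongrightarrow> 0) (at_right 0)"
    and start0: "(x0 \<longlongrightarrow> x 0) (at_right 0)"
    and start1: "((\<lambda>h. (1 / h) *\<^sub>R (x0 h - xm1 h)) \<longlongrightarrow> v 0) (at_right 0)"
    and T: "T \<ge> 0" and eps: "\<epsilon> > 0"
  shows "eventually (\<lambda>h. \<forall>k. real k * h \<le> T \<longrightarrow>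
     norm (snd (nag gradf (h^2) (beta h) (xm1 h) (x0 h) k) - x (real k * h)) +
     norm ((1/h) *\<^sub>R (snd (nag gradf (h^2) (beta h) (xm1 h) (x0 h) k)
                     - fst (nag gradf (h^2) (beta h) (xm1 h) (x0 h) k)) - v (real k * h)) \<le> \<epsilon>) (at_right 0)"
proof -
  have vc: "continuous_on {0..} v"
    unfolding continuous_on_eq_continuous_within using ode_v has_vector_derivative_continuous by fastforce
  have xc: "continuous_on {0..} x"
    unfolding continuous_on_eq_continuous_within using ode_x has_vector_derivative_continuous by fastforce
  have "L-lipschitz_on UNIV gradf" by (rule lipschitz_onI) (auto simp: dist_norm smooth L)
  hence gc: "continuous_on UNIV gradf" by (rule lipschitz_on_continuous_on)
  have vdc: "continuous_on {0..} (\<lambda>t. - c *\<^sub>R v t - gradf (x t))"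
    by (intro continuous_intros vc continuous_on_compose2[OF gc xc]) auto
  have "compact (v ` {0..T})" by (rule compact_continuous_image) (rule continuous_on_subset[OF vc], auto)
  then obtain M0 where M0: "\<forall>y\<in>v ` {0..T}. norm y \<le> M0" using compact_imp_bounded bounded_iff by metis
  define M where "M = max M0 0"
  have M: "M \<ge> 0" "\<And>s. 0 \<le> s \<Longrightarrow> s \<le> T \<Longrightarrow> norm (v s) \<le> M" using M0 unfolding M_def by force+
  define K where "K = c + 1"
  define Cst where "Cst = 1 + 2*K + 4*L"
  define ES where "ES = exp (Cst*T)"
  define etas where "etas = \<epsilon> / (2*ES*(T+1))"
  have K: "K \<ge> 1" unfolding K_def using c by simp
  have Cst: "Cst \<ge> 0" unfolding Cst_def using K L by simp
  have ES: "ES > 0" unfolding ES_def by simp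
  have etas: "etas > 0" unfolding etas_def using eps ES T by simp
  define \<eta>1 where "\<eta>1 = etas/8"
  define \<eta>2 where "\<eta>2 = etas/4"
  define \<eta>3 where "\<eta>3 = min 1 (etas/(8*(M+1)))"
  have et: "\<eta>1 > 0" "\<eta>2 > 0" "\<eta>3 > 0" "\<eta>3 \<le> 1" unfolding \<eta>1_def \<eta>2_def \<eta>3_def using etas M by auto
  obtain d1 where d1: "d1 > 0" and d1P: "\<And>h s. 0 < h \<Longrightarrow> h < d1 \<Longrightarrow> 0 \<le> s \<Longrightarrow> s \<le> T \<Longrightarrow>
     norm (v (s+h) - v s - h *\<^sub>R (- c *\<^sub>R v s - gradf (x s))) \<le> h*\<eta>1"
    using unif_taylor[OF ode_v vdc et(1) T] by blast
  obtain d2 where d2: "d2 > 0" and d2P: "\<And>h s. 0 < h \<Longrightarrow> h < d2 \<Longrightarrow> 0 \<le> s \<Longrightarrow> s \<le> T \<Longrightarrow>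
     norm (x (s+h) - x s - h *\<^sub>R v (s+h)) \<le> h*\<eta>2"
    using unif_taylor[OF ode_x vc et(2) T] by blast
  define h0 where "h0 = min (min d1 d2) (min 1 (min (1/K) (etas/(16*(L*M+1)))))"
  have "L*M \<ge> 0" using L M(1) by simp
  hence LM: "16*(L*M+1) > 0" by (smt (verit))
  have h0: "h0 > 0" unfolding h0_def using d1 d2 K divide_pos_pos[OF etas LM] by simp
  have ev1: "eventually (\<lambda>h. 0 < h \<and> h < h0) (at_right 0)"
    by (rule eventually_at_rightI[OF _ h0]) auto
  have "eventually (\<lambda>h. dist ((beta h - (1 - c * h)) / h) 0 < \<eta>3) (at_right 0)"
    using beta_asym et(3) unfolding tendsto_iff by blast
  hence ev2: "eventually (\<lambda>h. 0 < h \<longrightarrow> \<bar>beta h - 1 + c*h\<bar> \<le> h*\<eta>3) (at_right 0)"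
  proof eventually_elim
    case (elim h)
    show ?case
    proof
      assume h: "0 < h"
      have "\<bar>beta h - 1 + c*h\<bar> = h * \<bar>(beta h - (1 - c * h)) / h\<bar>" using h by (simp add: abs_div)
      also have "\<dots> \<le> h * \<eta>3" using elim h by (intro mult_left_mono) (auto simp: dist_real_def)
      finally show "\<bar>beta h - 1 + c*h\<bar> \<le> h*\<eta>3" .
    qed
  qed
  have "((\<lambda>h. norm (x0 h - x 0) + norm ((1 / h) *\<^sub>R (x0 h - xm1 h) - v 0)) \<longlongrightarrow> 0 + 0) (at_right 0)"
    by (intro tendsto_add tendsto_norm_zero LIM_zero start0 start1)
  hence ev3: "eventually (\<lambda>h. norm (x0 h - x 0) + norm ((1 / h) *\<^sub>R (x0 h - xm1 h) - v 0) < \<epsilon>/(2*ES)) (at_right 0)"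
    using eps ES by (intro order_tendstoD(2)) auto
  show ?thesis using ev1 ev2 ev3
  proof eventually_elim
    case (elim h)
    have h: "0 < h" "h < h0" using elim(1) by auto
    have q: "\<bar>beta h - 1 + c*h\<bar> \<le> h*\<eta>3" using elim(2) h by simp
    define X where "X = nag gradf (h^2) (beta h) (xm1 h) (x0 h)"
    define a where "a j = norm (snd (X j) - x (real j * h)) + norm ((1/h) *\<^sub>R (snd (X j) - fst (X j)) - v (real j * h))" for j
    have a0: "a 0 < \<epsilon>/(2*ES)" using elim(3) unfolding a_def X_def by simp
    have h1: "h \<le> 1" "K*h \<le> 1" "h < d1" "h < d2" "h \<le> etas/(16*(L*M+1))"
    proof -
      show "h \<le> 1" "h < d1" "h < d2" "h \<le> etas/(16*(L*M+1))" using h unfolding h0_def by auto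
      have "h \<le> 1/K" using h unfolding h0_def by auto
      thus "K*h \<le> 1" using K by (simp add: field_simps)
    qed
    have small: "2*(\<eta>3*M + 2*h*L*M + \<eta>1) + \<eta>2 \<le> etas"
    proof -
      have "\<eta>3 * M \<le> etas/(8*(M+1)) * (M+1)" using M et unfolding \<eta>3_def
        by (intro mult_mono) auto
      moreover have "etas/(8*(M+1)) * (M+1) = etas/8" using M(1) by (simp add: field_simps)
      ultimately have A: "\<eta>3 * M \<le> etas/8" by (metis (no_types))
      have "h*(L*M) \<le> (etas/(16*(L*M+1)))*(L*M+1)" using h1(5) L M h by (intro mult_mono) auto
      moreover have "(etas/(16*(L*M+1)))*(L*M+1) = etas/16" using LM by (simp add: field_simps)
      ultimately have "h*(L*M) \<le> etas/16" by (metis (no_types))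
      moreover have "2*h*L*M = 2*(h*(L*M))" by simp
      ultimately have B: "2*h*L*M \<le> etas/8" by linarith
      show ?thesis using A B unfolding \<eta>1_def \<eta>2_def by simp
    qed
    have step: "a (Suc j) \<le> (1 + Cst*h) * a j + h*etas" if j: "real j * h \<le> T" for j
    proof -
      let ?s = "real j * h"
      have s0: "0 \<le> ?s" using h by simp
      have sh: "real (Suc j) * h = ?s + h" by (simp add: algebra_simps)
      have fs: "fst (X (Suc j)) = snd (X j)" unfolding X_def by (rule nag_fst)
      have "a (Suc j) \<le> (1 + (1 + 2*K + 4*L)*h) * a j + h*(2*(\<eta>3*M + 2*h*L*M + \<eta>1) + \<eta>2)"
        unfolding a_def sh fs
      proof (rule one_step[where g = gradf and \<beta> = "beta h" and c = c])
        show "snd (X (Suc j)) = (snd (X j) + beta h *\<^sub>R (snd (X j) - fst (X j))) -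
              (h^2) *\<^sub>R gradf (snd (X j) + beta h *\<^sub>R (snd (X j) - fst (X j)))"
          unfolding X_def by (rule nag_snd)
        show "norm (v (?s + h) - v ?s - h *\<^sub>R (- c *\<^sub>R v ?s - gradf (x ?s))) \<le> h * \<eta>1"
          using d1P[OF h(1) h1(3) s0 j] .
        show "norm (x (?s + h) - x ?s - h *\<^sub>R v (?s + h)) \<le> h * \<eta>2"
          using d2P[OF h(1) h1(4) s0 j] .
        show "norm (v ?s) \<le> M" using M(2)[OF s0 j] .
      qed (use h h1 K_def c L M et q smooth in auto)
      also have "\<dots> \<le> (1 + Cst*h) * a j + h*etas"
        unfolding Cst_def using small h by (intro add_left_mono mult_left_mono) auto
      finally show ?thesis .
    qed
    show ?case
    proof (intro allI impI)
      fix k assume k: "real k * h \<le> T"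
      have a0nn: "a 0 \<ge> 0" unfolding a_def by simp
      have g: "a k \<le> exp (Cst*h*real k) * (a 0 + real k*h*etas)"
      proof (rule gronwall[where C=Cst and h=h and \<eta>=etas and a=a and N=k and k=k])
        fix j assume "j < k"
        hence "real j * h \<le> real k * h" using h by (intro mult_right_mono) auto
        thus "a (Suc j) \<le> (1 + Cst * h) * a j + h * etas" using step k by simp
      qed (use h etas Cst a0nn in auto)
      also have "\<dots> \<le> ES * (a 0 + T*etas)"
      proof (rule mult_mono)
        show "exp (Cst*h*real k) \<le> ES" unfolding ES_def using k Cst
          by (simp add: mult.assoc mult.commute[of h] mult_left_mono)
        show "a 0 + real k*h*etas \<le> a 0 + T*etas" using k etas by (simp add: mult_right_mono)
      qed (use ES a0nn etas T h in auto)
      also have "\<dots> = ES * a 0 + ES*T*etas" by (simp add: algebra_simps)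
      also have "\<dots> \<le> \<epsilon>/2 + \<epsilon>/2"
      proof (rule add_mono)
        show "ES * a 0 \<le> \<epsilon>/2" using a0 ES by (simp add: field_simps)
        have T1: "T + 1 > 0" using T by linarith
        have D: "2*ES*(T+1) > 0" using ES T1 by simp
        have "ES*etas*(2*(T+1)) = (\<epsilon>/(2*ES*(T+1))) * (2*ES*(T+1))" unfolding etas_def by (simp add: ac_simps)
        also have "\<dots> = \<epsilon>" using D by (metis less_irrefl nonzero_divide_eq_eq)
        finally have "ES*etas*(2*(T+1)) = \<epsilon>" .
        hence "2*(ES*etas*T) + 2*(ES*etas) = \<epsilon>" by (simp add: algebra_simps)
        moreover have "ES*etas \<ge> 0" using ES etas by simp
        moreover have "ES*T*etas = ES*etas*T" by simp
        ultimately show "ES*T*etas \<le> \<epsilon>/2" by linarith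
      qed
      finally show "norm (snd (nag gradf (h^2) (beta h) (xm1 h) (x0 h) k) - x (real k * h)) +
         norm ((1/h) *\<^sub>R (snd (nag gradf (h^2) (beta h) (xm1 h) (x0 h) k)
                     - fst (nag gradf (h^2) (beta h) (xm1 h) (x0 h) k)) - v (real k * h)) \<le> \<epsilon>"
        unfolding a_def X_def by simp
    qed
  qed
qed


lemma conv_close:
  fixes f g :: "'b \<Rightarrow> 'a::real_normed_vector"
  assumes "\<And>\<epsilon>. \<epsilon> > 0 \<Longrightarrow> eventually (\<lambda>n. norm (f n - g n) \<le> \<epsilon>) F" and "(g \<longlongrightarrow> l) F"
  shows "(f \<longlongrightarrow> l) F"
proof -
  have "((\<lambda>n. f n - g n) \<longlongrightarrow> 0) F"
    unfolding tendsto_iff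
  proof (intro allI impI)
    fix e :: real assume e: "e > 0"
    show "eventually (\<lambda>n. dist (f n - g n) 0 < e) F"
    proof -
      have "eventually (\<lambda>n. norm (f n - g n) \<le> e/2) F" by (rule assms(1)) (use e in simp)
      thus ?thesis by (rule eventually_mono) (use e in \<open>auto simp: dist_norm\<close>)
    qed
  qed
  from tendsto_add[OF this assms(2)] show ?thesis by simp
qed

theorem theorem7:
  fixes f :: "'a::euclidean_space \<Rightarrow> real" and gradf :: "'a \<Rightarrow> 'a"
    and m L bbar :: real and xstar xinit vinit :: 'a
    and x v :: "real \<Rightarrow> 'a"
    and beta :: "real \<Rightarrow> real" and xm1 x0 :: "real \<Rightarrow> 'a"
  assumes mpos: "0 < m" and mL: "m \<le> L"
    and grad: "\<And>z. (f has_derivative (\<lambda>u. gradf z \<bullet> u)) (at z)"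
    and strong_convex: "\<And>z y. f y \<ge> f z + gradf z \<bullet> (y - z) + m / 2 * (norm (y - z))^2"
    and smooth: "\<And>z y. norm (gradf z - gradf y) \<le> L * norm (z - y)"
    and minimizer: "\<And>y. f xstar \<le> f y"
    and bpos: "0 < bbar"
    and ode_x: "\<And>t. t \<ge> 0 \<Longrightarrow> (x has_vector_derivative v t) (at t within {0..})"
    and ode_v: "\<And>t. t \<ge> 0 \<Longrightarrow>
        (v has_vector_derivative (- (bbar * sqrt m) *\<^sub>R v t - gradf (x t))) (at t within {0..})"
    and init_x: "x 0 = xinit" and init_v: "v 0 = vinit"
    and beta_asym: "((\<lambda>h. (beta h - (1 - bbar * sqrt m * h)) / h) \<longlongrightarrow> 0) (at_right 0)"
    and start0: "(x0 \<longlongrightarrow> xinit) (at_right 0)"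
    and start1: "((\<lambda>h. (1 / h) *\<^sub>R (x0 h - xm1 h)) \<longlongrightarrow> vinit) (at_right 0)"
  shows
   "let X = (\<lambda>h k. nag gradf (h^2) (beta h) (xm1 h) (x0 h) k);
        rh = (\<lambda>h. THE r. Xi (sqrt m * h) r ((1 - beta h) / (sqrt m * h)) = 0);
        V = (\<lambda>h k. (1 / (1 - rh h * (sqrt m * h))) ^ k *
               (f (snd (X h k)) - f xstar
                + m / 2 * (norm (((1 - rh h * (sqrt m * h)) / (sqrt m * h)) *\<^sub>R
                                   (snd (X h k) - fst (X h k))
                                 + rh h *\<^sub>R (snd (X h k) - xstar)))^2));
        rbar = (THE r. Xibar r bbar = 0);
        lam = sqrt m * rbar;
        Vbar = (\<lambda>t. exp (lam * t) *
               (f (x t) - f xstar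
                + m / 2 * (norm ((1 / sqrt m) *\<^sub>R v t + rbar *\<^sub>R (x t - xstar)))^2))
    in (rh \<longlongrightarrow> rbar) (at_right 0) \<and>
       (\<forall>t \<ge> 0. \<forall>hs :: nat \<Rightarrow> real. \<forall>ks :: nat \<Rightarrow> nat.
          (\<forall>n. 0 < hs n) \<and> hs \<longlonglongrightarrow> 0 \<and> filterlim ks at_top sequentially
          \<and> (\<lambda>n. real (ks n) * hs n) \<longlonglongrightarrow> t \<longrightarrow>
            (\<lambda>n. snd (X (hs n) (ks n))) \<longlonglongrightarrow> x t
          \<and> (\<lambda>n. (1 / hs n) *\<^sub>R (snd (X (hs n) (Suc (ks n))) - snd (X (hs n) (ks n))))
               \<longlonglongrightarrow> v t
          \<and> (\<lambda>n. V (hs n) (ks n)) \<longlonglongrightarrow> Vbar t)"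
proof -
  define X where "X = (\<lambda>h k. nag gradf (h^2) (beta h) (xm1 h) (x0 h) k)"
  define rh where "rh = (\<lambda>h. THE r. Xi (sqrt m * h) r ((1 - beta h) / (sqrt m * h)) = 0)"
  define V where "V = (\<lambda>h k. (1 / (1 - rh h * (sqrt m * h))) ^ k *
               (f (snd (X h k)) - f xstar
                + m / 2 * (norm (((1 - rh h * (sqrt m * h)) / (sqrt m * h)) *\<^sub>R
                                   (snd (X h k) - fst (X h k))
                                 + rh h *\<^sub>R (snd (X h k) - xstar)))^2))"
  define rbar where "rbar = (THE r. Xibar r bbar = 0)"
  define lam where "lam = sqrt m * rbar"
  define Vbar where "Vbar = (\<lambda>t. exp (lam * t) *
               (f (x t) - f xstar
                + m / 2 * (norm ((1 / sqrt m) *\<^sub>R v t + rbar *\<^sub>R (x t - xstar)))^2))"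
  have part1: "(rh \<longlongrightarrow> rbar) (at_right 0)"
    unfolding rh_def rbar_def by (rule rh_conv[OF mpos beta_asym])
  have part2: "\<forall>t \<ge> 0. \<forall>hs :: nat \<Rightarrow> real. \<forall>ks :: nat \<Rightarrow> nat.
          (\<forall>n. 0 < hs n) \<and> hs \<longlonglongrightarrow> 0 \<and> filterlim ks at_top sequentially
          \<and> (\<lambda>n. real (ks n) * hs n) \<longlonglongrightarrow> t \<longrightarrow>
            (\<lambda>n. snd (X (hs n) (ks n))) \<longlonglongrightarrow> x t
          \<and> (\<lambda>n. (1 / hs n) *\<^sub>R (snd (X (hs n) (Suc (ks n))) - snd (X (hs n) (ks n))))
               \<longlonglongrightarrow> v t
          \<and> (\<lambda>n. V (hs n) (ks n)) \<longlonglongrightarrow> Vbar t"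
  proof (intro allI impI)
    fix t :: real and hs :: "nat \<Rightarrow> real" and ks :: "nat \<Rightarrow> nat"
    assume t: "t \<ge> 0"
    assume H: "(\<forall>n. 0 < hs n) \<and> hs \<longlonglongrightarrow> 0 \<and> filterlim ks at_top sequentially
          \<and> (\<lambda>n. real (ks n) * hs n) \<longlonglongrightarrow> t"
    hence hpos: "\<And>n. 0 < hs n" and hs0: "hs \<longlonglongrightarrow> 0" and kh: "(\<lambda>n. real (ks n) * hs n) \<longlonglongrightarrow> t"
      by auto
    have hsF: "filterlim hs (at_right 0) sequentially"
      by (rule tendsto_imp_filterlim_at_right[OF hs0]) (simp add: hpos)
    have kh1: "(\<lambda>n. real (Suc (ks n)) * hs n) \<longlonglongrightarrow> t"
    proof -
      have "(\<lambda>n. real (ks n) * hs n + hs n) \<longlonglongrightarrow> t + 0" by (intro tendsto_add kh hs0)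
      thus ?thesis by (simp add: algebra_simps)
    qed
    define c where "c = bbar * sqrt m"
    have c: "c \<ge> 0" unfolding c_def using bpos mpos by simp
    have L0: "L \<ge> 0" using mpos mL by simp
    define E where "E h k = norm (snd (X h k) - x (real k * h)) +
       norm ((1/h) *\<^sub>R (snd (X h k) - fst (X h k)) - v (real k * h))" for h k
    have Ekey: "eventually (\<lambda>n. E (hs n) (ks n) \<le> \<epsilon> \<and> E (hs n) (Suc (ks n)) \<le> \<epsilon>) sequentially"
      if eps: "\<epsilon> > 0" for \<epsilon>
    proof -
      have T1: "0 \<le> t + 1" using t by simp
      have "eventually (\<lambda>h. \<forall>k. real k * h \<le> t + 1 \<longrightarrow> E h k \<le> \<epsilon>) (at_right 0)"
        unfolding E_def X_def
        by (rule key_err[where c = c and L = L, OF L0 c smooth ode_x ode_v[unfolded c_def[symmetric]]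
              beta_asym[unfolded c_def[symmetric]] start0[folded init_x] start1[folded init_v] T1 eps])
      hence e1: "eventually (\<lambda>n. \<forall>k. real k * hs n \<le> t + 1 \<longrightarrow> E (hs n) k \<le> \<epsilon>) sequentially"
        using hsF unfolding filterlim_iff by blast
      have e2: "eventually (\<lambda>n. real (ks n) * hs n < t + 1) sequentially"
        using order_tendstoD(2)[OF kh] by simp
      have e3: "eventually (\<lambda>n. real (Suc (ks n)) * hs n < t + 1) sequentially"
        using order_tendstoD(2)[OF kh1] by simp
      from e1 e2 e3 show ?thesis by eventually_elim auto
    qed
    have xc: "continuous_on {0..} x"
      unfolding continuous_on_eq_continuous_within using ode_x has_vector_derivative_continuous by fastforce
    have vc: "continuous_on {0..} v"
      unfolding continuous_on_eq_continuous_within using ode_v has_vector_derivative_continuous by fastforce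
    have nn: "\<And>n. real (ks n) * hs n \<in> {0..}" "\<And>n. real (Suc (ks n)) * hs n \<in> {0..}"
      using hpos by (auto simp: less_imp_le)
    have xlim: "(\<lambda>n. x (real (ks n) * hs n)) \<longlonglongrightarrow> x t"
      by (rule continuous_on_tendsto_compose[OF xc kh]) (use t nn in auto)
    have vlim: "(\<lambda>n. v (real (ks n) * hs n)) \<longlonglongrightarrow> v t"
      by (rule continuous_on_tendsto_compose[OF vc kh]) (use t nn in auto)
    have vlim1: "(\<lambda>n. v (real (Suc (ks n)) * hs n)) \<longlonglongrightarrow> v t"
      by (rule continuous_on_tendsto_compose[OF vc kh1]) (use t nn in auto)
    have E1: "\<And>h k. norm (snd (X h k) - x (real k * h)) \<le> E h k" by (simp add: E_def)
    have E2: "\<And>h k. norm ((1/h) *\<^sub>R (snd (X h k) - fst (X h k)) - v (real k * h)) \<le> E h k" by (simp add: E_def)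
    have fsX: "\<And>h k. fst (X h (Suc k)) = snd (X h k)" unfolding X_def by (rule nag_fst)
    have C1: "(\<lambda>n. snd (X (hs n) (ks n))) \<longlonglongrightarrow> x t"
    proof (rule conv_close[OF _ xlim])
      fix e :: real assume "e > 0"
      from Ekey[OF this] show "eventually (\<lambda>n. norm (snd (X (hs n) (ks n)) - x (real (ks n) * hs n)) \<le> e) sequentially"
        by (rule eventually_mono) (meson E1 order_trans)
    qed
    have U: "(\<lambda>n. (1 / hs n) *\<^sub>R (snd (X (hs n) (ks n)) - fst (X (hs n) (ks n)))) \<longlonglongrightarrow> v t"
    proof (rule conv_close[OF _ vlim])
      fix e :: real assume "e > 0"
      from Ekey[OF this] show "eventually (\<lambda>n. norm ((1 / hs n) *\<^sub>R (snd (X (hs n) (ks n)) - fst (X (hs n) (ks n)))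
           - v (real (ks n) * hs n)) \<le> e) sequentially"
        by (rule eventually_mono) (meson E2 order_trans)
    qed
    have C2: "(\<lambda>n. (1 / hs n) *\<^sub>R (snd (X (hs n) (Suc (ks n))) - snd (X (hs n) (ks n)))) \<longlonglongrightarrow> v t"
    proof (rule conv_close[OF _ vlim1])
      fix e :: real assume "e > 0"
      from Ekey[OF this] show "eventually (\<lambda>n. norm ((1 / hs n) *\<^sub>R (snd (X (hs n) (Suc (ks n))) - snd (X (hs n) (ks n)))
           - v (real (Suc (ks n)) * hs n)) \<le> e) sequentially"
        by (rule eventually_mono) (metis E2 fsX order_trans)
    qed
    have rlim: "(\<lambda>n. rh (hs n)) \<longlonglongrightarrow> rbar" by (rule filterlim_compose[OF part1 hsF])
    define a where "a n = rh (hs n) * (sqrt m * hs n)" for n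
    have alim: "a \<longlonglongrightarrow> 0"
    proof -
      have "a \<longlonglongrightarrow> rbar * (sqrt m * 0)" unfolding a_def by (intro tendsto_intros rlim hs0)
      thus ?thesis by simp
    qed
    have philim: "(\<lambda>n. phi (a n)) \<longlonglongrightarrow> 1"
      using isCont_tendsto_compose[OF phi_cont alim] by (simp add: phi_def)
    have explim: "(\<lambda>n. exp (real (ks n) * a n * phi (a n))) \<longlonglongrightarrow> exp (lam * t)"
    proof -
      have "(\<lambda>n. exp ((rh (hs n) * sqrt m * (real (ks n) * hs n)) * phi (a n))) \<longlonglongrightarrow> exp ((rbar * sqrt m * t) * 1)"
        by (intro tendsto_intros rlim kh philim)
      moreover have "(\<lambda>n. exp ((rh (hs n) * sqrt m * (real (ks n) * hs n)) * phi (a n))) = (\<lambda>n. exp (real (ks n) * a n * phi (a n)))"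
        by (rule ext) (simp add: a_def algebra_simps)
      moreover have "exp ((rbar * sqrt m * t) * 1) = exp (lam * t)" by (simp add: lam_def algebra_simps)
      ultimately show ?thesis by metis
    qed
    have fc: "isCont f (x t)" using has_derivative_continuous[OF grad] by simp
    have innerlim: "(\<lambda>n. f (snd (X (hs n) (ks n))) - f xstar + m / 2 *
        (norm (((1 - a n) / sqrt m) *\<^sub>R ((1 / hs n) *\<^sub>R (snd (X (hs n) (ks n)) - fst (X (hs n) (ks n))))
          + rh (hs n) *\<^sub>R (snd (X (hs n) (ks n)) - xstar)))^2)
        \<longlonglongrightarrow> f (x t) - f xstar + m / 2 * (norm (((1 - 0) / sqrt m) *\<^sub>R v t + rbar *\<^sub>R (x t - xstar)))^2"
      using mpos by (intro tendsto_intros isCont_tendsto_compose[OF fc C1] alim U rlim C1) auto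
    have Vlim0: "(\<lambda>n. exp (real (ks n) * a n * phi (a n)) * (f (snd (X (hs n) (ks n))) - f xstar + m / 2 *
        (norm (((1 - a n) / sqrt m) *\<^sub>R ((1 / hs n) *\<^sub>R (snd (X (hs n) (ks n)) - fst (X (hs n) (ks n))))
          + rh (hs n) *\<^sub>R (snd (X (hs n) (ks n)) - xstar)))^2)) \<longlonglongrightarrow> Vbar t"
      using tendsto_mult[OF explim innerlim] unfolding Vbar_def by simp
    have ev: "eventually (\<lambda>n. a n < 1) sequentially"
      using order_tendstoD(2)[OF alim] by simp
    have "eventually (\<lambda>n. exp (real (ks n) * a n * phi (a n)) * (f (snd (X (hs n) (ks n))) - f xstar + m / 2 *
        (norm (((1 - a n) / sqrt m) *\<^sub>R ((1 / hs n) *\<^sub>R (snd (X (hs n) (ks n)) - fst (X (hs n) (ks n))))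
          + rh (hs n) *\<^sub>R (snd (X (hs n) (ks n)) - xstar)))^2) = V (hs n) (ks n)) sequentially"
      using ev
    proof eventually_elim
      case (elim n)
      have "(1 - a n) / sqrt m * (1 / hs n) = (1 - a n) / (sqrt m * hs n)" by simp
      thus ?case unfolding V_def pow_exp_phi[OF elim, symmetric] a_def[symmetric]
        by (simp only: scaleR_scaleR)
    qed
    from Lim_transform_eventually[OF Vlim0 this]
    have C3: "(\<lambda>n. V (hs n) (ks n)) \<longlonglongrightarrow> Vbar t" .
    show "(\<lambda>n. snd (X (hs n) (ks n))) \<longlonglongrightarrow> x t
          \<and> (\<lambda>n. (1 / hs n) *\<^sub>R (snd (X (hs n) (Suc (ks n))) - snd (X (hs n) (ks n))))
               \<longlonglongrightarrow> v t
          \<and> (\<lambda>n. V (hs n) (ks n)) \<longlonglongrightarrow> Vbar t" using C1 C2 C3 by blast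
  qed
  show ?thesis
    unfolding Let_def using part1 part2
    unfolding X_def rh_def V_def rbar_def lam_def Vbar_def by blast
qed

end
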